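(* Let $G$ be a graph and $k\ge\Delta(G)$. If every block of $G$ is strongly $k$-edge-orientable, then $G$ is strongly $k$-edge-orientable.
   Context: All graphs are simple. A block is a maximal $2$-connected subgraph. An orientation of a graph $H$ is any digraph obtained by replacing each edge $uv$ with the arc $(u,v)$, with the arc $(v,u)$, or with both arcs. A kernel of a digraph $D$ is an independent set $S$ such that every vertex of $D-S$ has an out-neighbor in $S$. $D$ is kernel-perfect if every induced subdigraph of $D$ has a kernel. For $f:V(H)\to\mathbb{N}$, an orientation $D$ of $H$ is $f$-kernel-perfect if it is kernel-perfect and $f(v)\ge 1+d^+_D(v)$ for all $v$. For $f:E(G)\to\mathbb{N}$, $G$ is $f$-edge-orientable if its line graph $L(G)$ admits an $f$-kernel-perfect orientation. For $v\in V(G)$, define $f_{k,v}:E(G)\to\mathbb{N}$ by $f_{k,v}(e)=d_G(v)$ if $e$ is incident to $v$, and $f_{k,v}(e)=k$ otherwise. $G$ is strongly $k$-edge-orientable if $G$ is $f_{k,v}$-edge-orientable for every $v\in V(G)$. *)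

theory Defs
  imports Main
begin

definition simple_graph :: "'a set \<Rightarrow> 'a set set \<Rightarrow> bool" where
  "simple_graph V E \<longleftrightarrow> finite V \<and> (\<forall>e\<in>E. e \<subseteq> V \<and> card e = 2)"

definition degree :: "'a set set \<Rightarrow> 'a \<Rightarrow> nat" where
  "degree E v = card {e\<in>E. v \<in> e}"

definition max_degree_le :: "'a set \<Rightarrow> 'a set set \<Rightarrow> nat \<Rightarrow> bool" where
  "max_degree_le V E k \<longleftrightarrow> (\<forall>v\<in>V. degree E v \<le> k)"

definition subgraph :: "'a set \<Rightarrow> 'a set set \<Rightarrow> 'a set \<Rightarrow> 'a set set \<Rightarrow> bool" where
  "subgraph V' E' V E \<longleftrightarrow> V' \<subseteq> V \<and> E' \<subseteq> E \<and> (\<forall>e\<in>E'. e \<subseteq> V')"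

definition connected_graph :: "'a set \<Rightarrow> 'a set set \<Rightarrow> bool" where
  "connected_graph V E \<longleftrightarrow> V \<noteq> {} \<and>
     (\<forall>x\<in>V. \<forall>y\<in>V. (\<lambda>a b. a \<in> V \<and> b \<in> V \<and> {a, b} \<in> E)\<^sup>*\<^sup>* x y)"

(* G - v is connected (the empty graph counts as connected here) *)
definition no_cut_vertex :: "'a set \<Rightarrow> 'a set set \<Rightarrow> bool" where
  "no_cut_vertex V E \<longleftrightarrow> (\<forall>v\<in>V. V - {v} = {} \<or> connected_graph (V - {v}) {e\<in>E. v \<notin> e})"

(* Block: maximal connected subgraph without a cut vertex
   (2-connected subgraphs, bridges K2, isolated vertices K1). *)
definition is_block :: "'a set \<Rightarrow> 'a set set \<Rightarrow> 'a set \<Rightarrow> 'a set set \<Rightarrow> bool" where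
  "is_block V E B EB \<longleftrightarrow> subgraph B EB V E \<and> connected_graph B EB \<and> no_cut_vertex B EB \<and>
     (\<forall>B' EB'. subgraph B' EB' V E \<and> B \<subseteq> B' \<and> EB \<subseteq> EB' \<and> connected_graph B' EB'
        \<and> no_cut_vertex B' EB' \<longrightarrow> B' = B \<and> EB' = EB)"

definition line_adj :: "'a set set \<Rightarrow> 'a set \<Rightarrow> 'a set \<Rightarrow> bool" where
  "line_adj E e e' \<longleftrightarrow> e \<in> E \<and> e' \<in> E \<and> e \<noteq> e' \<and> e \<inter> e' \<noteq> {}"

definition is_orientation :: "'b set \<Rightarrow> ('b \<Rightarrow> 'b \<Rightarrow> bool) \<Rightarrow> ('b \<times> 'b) set \<Rightarrow> bool" where
  "is_orientation X adj D \<longleftrightarrow>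
     (\<forall>(u, v)\<in>D. u \<in> X \<and> v \<in> X \<and> adj u v) \<and>
     (\<forall>u\<in>X. \<forall>v\<in>X. adj u v \<longrightarrow> (u, v) \<in> D \<or> (v, u) \<in> D)"

definition is_kernel_of :: "('b \<times> 'b) set \<Rightarrow> 'b set \<Rightarrow> 'b set \<Rightarrow> bool" where
  "is_kernel_of D Y S \<longleftrightarrow> S \<subseteq> Y \<and> (\<forall>x\<in>S. \<forall>y\<in>S. (x, y) \<notin> D) \<and>
     (\<forall>x\<in>Y - S. \<exists>y\<in>S. (x, y) \<in> D)"

definition kernel_perfect :: "'b set \<Rightarrow> ('b \<times> 'b) set \<Rightarrow> bool" where
  "kernel_perfect X D \<longleftrightarrow> (\<forall>Y\<subseteq>X. \<exists>S. is_kernel_of D Y S)"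

definition out_degree :: "('b \<times> 'b) set \<Rightarrow> 'b \<Rightarrow> nat" where
  "out_degree D v = card {u. (v, u) \<in> D}"

definition f_kernel_perfect_orientation ::
    "'b set \<Rightarrow> ('b \<Rightarrow> 'b \<Rightarrow> bool) \<Rightarrow> ('b \<Rightarrow> nat) \<Rightarrow> ('b \<times> 'b) set \<Rightarrow> bool" where
  "f_kernel_perfect_orientation X adj f D \<longleftrightarrow> is_orientation X adj D \<and> kernel_perfect X D \<and>
     (\<forall>v\<in>X. f v \<ge> 1 + out_degree D v)"

definition f_edge_orientable :: "'a set set \<Rightarrow> ('a set \<Rightarrow> nat) \<Rightarrow> bool" where
  "f_edge_orientable E f \<longleftrightarrow> (\<exists>D. f_kernel_perfect_orientation E (line_adj E) f D)"

definition f_kv :: "'a set set \<Rightarrow> nat \<Rightarrow> 'a \<Rightarrow> 'a set \<Rightarrow> nat" where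
  "f_kv E k v e = (if v \<in> e then degree E v else k)"

definition strongly_k_edge_orientable :: "'a set \<Rightarrow> 'a set set \<Rightarrow> nat \<Rightarrow> bool" where
  "strongly_k_edge_orientable V E k \<longleftrightarrow> (\<forall>v\<in>V. f_edge_orientable E (f_kv E k v))"

end

theory Submission imports Defs begin

lemma strongly_empty: "strongly_k_edge_orientable B {} k"
  unfolding strongly_k_edge_orientable_def f_edge_orientable_def f_kernel_perfect_orientation_def
    is_orientation_def kernel_perfect_def is_kernel_of_def
  by (rule ballI, rule exI[of _ "{}"]) (auto simp: line_adj_def)

lemma glue:
  assumes sg: "simple_graph V E" and md: "max_degree_le V E k"
    and VV: "V = V1 \<union> V2" and int: "V1 \<inter> V2 \<subseteq> {c}" and cV2: "c \<in> V2" and vV1: "v \<in> V1"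
    and E1def: "E1 = {e\<in>E. e \<subseteq> V1}" and E2def: "E2 = {e\<in>E. e \<subseteq> V2}"
    and split: "\<forall>e\<in>E. e \<subseteq> V1 \<or> e \<subseteq> V2"
    and o1: "f_edge_orientable E1 (f_kv E1 k v)" and o2: "f_edge_orientable E2 (f_kv E2 k c)"
  shows "f_edge_orientable E (f_kv E k v)"
proof -
  obtain D1 where D1: "f_kernel_perfect_orientation E1 (line_adj E1) (f_kv E1 k v) D1"
    using o1 f_edge_orientable_def by blast
  obtain D2 where D2: "f_kernel_perfect_orientation E2 (line_adj E2) (f_kv E2 k c) D2"
    using o2 f_edge_orientable_def by blast
  define X where "X = {(e2,e1). e2\<in>E2 \<and> e1\<in>E1 \<and> c\<in>e1 \<and> c\<in>e2}"
  define D where "D = D1 \<union> D2 \<union> X"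
  have finV: "finite V" and Ec: "\<And>e. e \<in> E \<Longrightarrow> e \<subseteq> V \<and> card e = 2"
    using sg unfolding simple_graph_def by auto
  have finE: "finite E"
    by (rule finite_subset[of _ "Pow V"]) (use Ec finV in auto)
  have finE1: "finite E1" and finE2: "finite E2" using finE E1def E2def by auto
  have disj: "E1 \<inter> E2 = {}"
  proof (rule ccontr)
    assume "E1 \<inter> E2 \<noteq> {}"
    then obtain e where e: "e \<in> E" "e \<subseteq> V1" "e \<subseteq> V2" using E1def E2def by auto
    hence "e \<subseteq> {c}" using int by auto
    hence "card e \<le> 1" using card_mono[of "{c}" e] by auto
    thus False using Ec[OF e(1)] by auto
  qed
  have EU: "E = E1 \<union> E2" using E1def E2def split by auto
  have oD1: "is_orientation E1 (line_adj E1) D1" and kD1: "kernel_perfect E1 D1"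
    and fD1: "\<forall>u\<in>E1. f_kv E1 k v u \<ge> 1 + out_degree D1 u"
    using D1 unfolding f_kernel_perfect_orientation_def by auto
  have oD2: "is_orientation E2 (line_adj E2) D2" and kD2: "kernel_perfect E2 D2"
    and fD2: "\<forall>u\<in>E2. f_kv E2 k c u \<ge> 1 + out_degree D2 u"
    using D2 unfolding f_kernel_perfect_orientation_def by auto
  have D1sub: "D1 \<subseteq> E1 \<times> E1" using oD1 unfolding is_orientation_def by auto
  have D2sub: "D2 \<subseteq> E2 \<times> E2" using oD2 unfolding is_orientation_def by auto
  have Xsub: "X \<subseteq> E2 \<times> E1" unfolding X_def by auto
  have inter_c: "c \<in> u \<and> c \<in> w" if uw: "u \<in> E1" "w \<in> E2" "u \<inter> w \<noteq> {}" for u w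
  proof -
    obtain z where "z \<in> u" "z \<in> w" using uw(3) by auto
    hence "z \<in> V1 \<inter> V2" using uw E1def E2def by auto
    hence "z = c" using int by auto
    thus ?thesis using \<open>z \<in> u\<close> \<open>z \<in> w\<close> by auto
  qed
  have orient: "is_orientation E (line_adj E) D"
    unfolding is_orientation_def
  proof (intro conjI ballI impI)
    fix p assume "p \<in> D"
    then obtain u w where p: "p = (u,w)" "(u,w) \<in> D" by (cases p) auto
    have "u \<in> E \<and> w \<in> E \<and> line_adj E u w"
    proof -
      consider "(u,w) \<in> D1" | "(u,w) \<in> D2" | "(u,w) \<in> X" using p D_def by auto
      thus ?thesis
      proof cases
        case 1 thus ?thesis using oD1 EU unfolding is_orientation_def line_adj_def by auto
      next
        case 2 thus ?thesis using oD2 EU unfolding is_orientation_def line_adj_def by auto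
      next
        case 3 thus ?thesis using disj EU unfolding X_def line_adj_def by auto
      qed
    qed
    thus "case p of (u, v) \<Rightarrow> u \<in> E \<and> v \<in> E \<and> line_adj E u v" using p by auto
  next
    fix u w assume u: "u \<in> E" and w: "w \<in> E" and adj: "line_adj E u w"
    show "(u, w) \<in> D \<or> (w, u) \<in> D"
    proof (cases "u \<in> E1")
      case True
      show ?thesis
      proof (cases "w \<in> E1")
        case True
        hence "line_adj E1 u w" using \<open>u \<in> E1\<close> adj unfolding line_adj_def by auto
        thus ?thesis using oD1 True \<open>u \<in> E1\<close> unfolding is_orientation_def D_def by auto
      next
        case False
        hence "w \<in> E2" using w EU by auto
        hence "c \<in> u \<and> c \<in> w" using inter_c \<open>u \<in> E1\<close> adj unfolding line_adj_def by auto
        thus ?thesis using \<open>w \<in> E2\<close> \<open>u \<in> E1\<close> unfolding D_def X_def by auto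
      qed
    next
      case False
      hence u2: "u \<in> E2" using u EU by auto
      show ?thesis
      proof (cases "w \<in> E1")
        case True
        hence "c \<in> u \<and> c \<in> w" using inter_c u2 adj unfolding line_adj_def by blast
        thus ?thesis using True u2 unfolding D_def X_def by auto
      next
        case False
        hence "w \<in> E2" using w EU by auto
        hence "line_adj E2 u w" using u2 adj unfolding line_adj_def by auto
        thus ?thesis using oD2 \<open>w \<in> E2\<close> u2 unfolding is_orientation_def D_def by auto
      qed
    qed
  qed
  have degsplit: "degree E x = degree E1 x + degree E2 x" for x
  proof -
    have "{e\<in>E. x \<in> e} = {e\<in>E1. x \<in> e} \<union> {e\<in>E2. x \<in> e}" using EU by auto
    moreover have "{e\<in>E1. x \<in> e} \<inter> {e\<in>E2. x \<in> e} = {}" using disj by auto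
    ultimately show ?thesis unfolding degree_def
      using finE1 finE2 by (simp add: card_Un_disjoint)
  qed
  have cV: "c \<in> V" using cV2 VV by auto
  have degc: "degree E c \<le> k" using md cV unfolding max_degree_le_def by auto
  have outd: "f_kv E k v u \<ge> 1 + out_degree D u" if u: "u \<in> E" for u
  proof (cases "u \<in> E1")
    case True
    have "{w. (u,w) \<in> D} = {w. (u,w) \<in> D1}"
      using True disj D2sub Xsub unfolding D_def by auto
    hence "out_degree D u = out_degree D1 u" unfolding out_degree_def by simp
    moreover have "f_kv E1 k v u \<le> f_kv E k v u"
      using degsplit[of v] unfolding f_kv_def by auto
    ultimately show ?thesis using fD1 True by fastforce
  next
    case False
    hence u2: "u \<in> E2" using u EU by auto
    have sub: "{w. (u,w) \<in> D} \<subseteq> {w. (u,w) \<in> D2} \<union> {w\<in>E1. c \<in> w \<and> c \<in> u}"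
      using False D1sub unfolding D_def X_def by auto
    have fin2: "finite {w. (u,w) \<in> D2}"
      by (rule finite_subset[of _ E2]) (use D2sub finE2 in auto)
    have "out_degree D u \<le> card ({w. (u,w) \<in> D2} \<union> {w\<in>E1. c \<in> w \<and> c \<in> u})"
      unfolding out_degree_def by (rule card_mono) (use fin2 finE1 sub in auto)
    also have "\<dots> \<le> out_degree D2 u + card {w\<in>E1. c \<in> w \<and> c \<in> u}"
      unfolding out_degree_def by (rule card_Un_le)
    finally have ob: "out_degree D u \<le> out_degree D2 u + card {w\<in>E1. c \<in> w \<and> c \<in> u}" .
    have f2: "f_kv E2 k c u \<ge> 1 + out_degree D2 u" using fD2 u2 by auto
    have uV2: "u \<subseteq> V2" using u2 E2def by auto
    show ?thesis
    proof (cases "c \<in> u")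
      case True
      have "card {w\<in>E1. c \<in> w \<and> c \<in> u} = degree E1 c"
        unfolding degree_def using True by simp
      moreover have "f_kv E2 k c u = degree E2 c" using True unfolding f_kv_def by simp
      moreover have "f_kv E k v u \<ge> degree E c"
      proof (cases "v \<in> u")
        case True
        hence "v = c" using uV2 vV1 int by auto
        thus ?thesis using True unfolding f_kv_def by simp
      next
        case False thus ?thesis using degc unfolding f_kv_def by simp
      qed
      ultimately show ?thesis using ob f2 degsplit[of c] by linarith
    next
      case False
      have "card {w\<in>E1. c \<in> w \<and> c \<in> u} = 0" using False by auto
      moreover have "f_kv E2 k c u = k" using False unfolding f_kv_def by simp
      moreover have "v \<notin> u"
      proof
        assume "v \<in> u" hence "v = c" using uV2 vV1 int by auto
        thus False using False \<open>v \<in> u\<close> by simp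
      qed
      hence "f_kv E k v u = k" unfolding f_kv_def by simp
      ultimately show ?thesis using ob f2 by linarith
    qed
  qed
  have kp: "kernel_perfect E D"
    unfolding kernel_perfect_def
  proof (intro allI impI)
    fix Y assume Y: "Y \<subseteq> E"
    define Y1 where "Y1 = Y \<inter> E1"
    define Y2 where "Y2 = Y \<inter> E2"
    obtain S1 where S1: "is_kernel_of D1 Y1 S1" using kD1 Y1_def unfolding kernel_perfect_def by auto
    have S1p: "S1 \<subseteq> Y1" "\<forall>x\<in>S1. \<forall>y\<in>S1. (x,y) \<notin> D1" "\<forall>x\<in>Y1 - S1. \<exists>y\<in>S1. (x,y) \<in> D1"
      using S1 unfolding is_kernel_of_def by auto
    show "\<exists>S. is_kernel_of D Y S"
    proof (cases "\<exists>s\<in>S1. c \<in> s")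
      case True
      then obtain s where s: "s \<in> S1" "c \<in> s" by auto
      define Y2' where "Y2' = Y2 - {e. c \<in> e}"
      obtain S2 where S2: "is_kernel_of D2 Y2' S2" using kD2 Y2_def Y2'_def unfolding kernel_perfect_def by auto
      have S2p: "S2 \<subseteq> Y2'" "\<forall>x\<in>S2. \<forall>y\<in>S2. (x,y) \<notin> D2" "\<forall>x\<in>Y2' - S2. \<exists>y\<in>S2. (x,y) \<in> D2"
        using S2 unfolding is_kernel_of_def by auto
      have "is_kernel_of D Y (S1 \<union> S2)"
        unfolding is_kernel_of_def
      proof (intro conjI ballI)
        show "S1 \<union> S2 \<subseteq> Y" using S1p S2p Y1_def Y2_def Y2'_def by auto
      next
        fix x y assume x: "x \<in> S1 \<union> S2" and y: "y \<in> S1 \<union> S2"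
        show "(x,y) \<notin> D"
          using x y S1p S2p D1sub D2sub disj Y1_def Y2_def Y2'_def unfolding D_def X_def by blast
      next
        fix x assume x: "x \<in> Y - (S1 \<union> S2)"
        show "\<exists>y\<in>S1 \<union> S2. (x, y) \<in> D"
        proof (cases "x \<in> E1")
          case True thus ?thesis using x S1p(3) Y1_def unfolding D_def by blast
        next
          case False
          hence x2: "x \<in> E2" using x Y EU by auto
          show ?thesis
          proof (cases "c \<in> x")
            case True
            have "(x,s) \<in> X" using s x2 True S1p Y1_def unfolding X_def by auto
            thus ?thesis using s unfolding D_def by auto
          next
            case False
            hence "x \<in> Y2' - S2" using x x2 Y2_def Y2'_def by auto
            thus ?thesis using S2p(3) unfolding D_def by blast
          qed
        qed
      qed
      thus ?thesis by blast
    next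
      case False
      obtain S2 where S2: "is_kernel_of D2 Y2 S2" using kD2 Y2_def unfolding kernel_perfect_def by auto
      have S2p: "S2 \<subseteq> Y2" "\<forall>x\<in>S2. \<forall>y\<in>S2. (x,y) \<notin> D2" "\<forall>x\<in>Y2 - S2. \<exists>y\<in>S2. (x,y) \<in> D2"
        using S2 unfolding is_kernel_of_def by auto
      have "is_kernel_of D Y (S1 \<union> S2)"
        unfolding is_kernel_of_def
      proof (intro conjI ballI)
        show "S1 \<union> S2 \<subseteq> Y" using S1p S2p Y1_def Y2_def by auto
      next
        fix x y assume x: "x \<in> S1 \<union> S2" and y: "y \<in> S1 \<union> S2"
        show "(x,y) \<notin> D"
          using x y S1p S2p D1sub D2sub disj Y1_def Y2_def False unfolding D_def X_def by blast
      next
        fix x assume x: "x \<in> Y - (S1 \<union> S2)"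
        show "\<exists>y\<in>S1 \<union> S2. (x, y) \<in> D"
        proof (cases "x \<in> E1")
          case True thus ?thesis using x S1p(3) Y1_def unfolding D_def by blast
        next
          case False
          hence "x \<in> Y2 - S2" using x Y EU Y2_def by auto
          thus ?thesis using S2p(3) unfolding D_def by blast
        qed
      qed
      thus ?thesis by blast
    qed
  qed
  show ?thesis unfolding f_edge_orientable_def f_kernel_perfect_orientation_def
    using orient kp outd by blast
qed


lemma reach_side:
  assumes "(\<lambda>a b. a \<in> P \<and> b \<in> P \<and> {a,b} \<in> EE)\<^sup>*\<^sup>* x z"
    and "x \<in> V1" and "P \<inter> V1 \<inter> V2 = {}" and "EE \<subseteq> E" and "\<forall>e\<in>E. e \<subseteq> V1 \<or> e \<subseteq> V2"
  shows "z \<in> V1"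
  using assms(1)
proof (induction rule: rtranclp_induct)
  case base thus ?case using assms(2) by simp
next
  case (step y z)
  hence "y \<notin> V2" using assms(3) by auto
  moreover have "{y,z} \<in> E" using step assms(4) by auto
  hence "{y,z} \<subseteq> V1 \<or> {y,z} \<subseteq> V2" using assms(5) by blast
  ultimately show ?case by auto
qed

lemma sep:
  assumes "subgraph H EH V E" and "connected_graph H EH" and "no_cut_vertex H EH"
    and "V = V1 \<union> V2" and "V1 \<inter> V2 \<subseteq> {c}" and spl: "\<forall>e\<in>E. e \<subseteq> V1 \<or> e \<subseteq> V2"
  shows "H \<subseteq> V1 \<or> H \<subseteq> V2"
proof (rule ccontr)
  assume "\<not> (H \<subseteq> V1 \<or> H \<subseteq> V2)"
  then obtain x y where x: "x \<in> H" "x \<notin> V2" and y: "y \<in> H" "y \<notin> V1" by auto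
  have HV: "H \<subseteq> V" "EH \<subseteq> E" using assms(1) unfolding subgraph_def by auto
  have xV1: "x \<in> V1" using x HV assms(4) by auto
  show False
  proof (cases "c \<in> H \<and> c \<in> V1 \<and> c \<in> V2")
    case True
    have "H - {c} = {} \<or> connected_graph (H - {c}) {e\<in>EH. c \<notin> e}"
      using assms(3) True unfolding no_cut_vertex_def by auto
    moreover have "x \<in> H - {c}" "y \<in> H - {c}" using x y True by auto
    ultimately have "(\<lambda>a b. a \<in> H - {c} \<and> b \<in> H - {c} \<and> {a,b} \<in> {e\<in>EH. c \<notin> e})\<^sup>*\<^sup>* x y"
      unfolding connected_graph_def by blast
    hence "y \<in> V1" by (rule reach_side) (use xV1 assms(5) HV spl in auto)
    thus False using y by simp
  next
    case False
    have "(\<lambda>a b. a \<in> H \<and> b \<in> H \<and> {a,b} \<in> EH)\<^sup>*\<^sup>* x y"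
      using assms(2) x y unfolding connected_graph_def by blast
    hence "y \<in> V1" by (rule reach_side) (use xV1 assms(5) HV spl False in auto)
    thus False using y by simp
  qed
qed

lemma block_sub:
  assumes sg: "simple_graph V E" and VV: "V = V1 \<union> V2" and int: "V1 \<inter> V2 \<subseteq> {c}"
    and spl: "\<forall>e\<in>E. e \<subseteq> V1 \<or> e \<subseteq> V2" and E1def: "E1 = {e\<in>E. e \<subseteq> V1}"
    and bl: "is_block V1 E1 B EB" and ne: "EB \<noteq> {}"
  shows "is_block V E B EB"
proof -
  have Ec: "\<And>e. e \<in> E \<Longrightarrow> e \<subseteq> V \<and> card e = 2" using sg unfolding simple_graph_def by auto
  have sb: "subgraph B EB V1 E1" and cb: "connected_graph B EB" and nb: "no_cut_vertex B EB"
    and mx: "\<forall>B' EB'. subgraph B' EB' V1 E1 \<and> B \<subseteq> B' \<and> EB \<subseteq> EB' \<and> connected_graph B' EB'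
        \<and> no_cut_vertex B' EB' \<longrightarrow> B' = B \<and> EB' = EB"
    using bl unfolding is_block_def by auto
  have sub: "subgraph B EB V E" using sb VV E1def unfolding subgraph_def by auto
  have "B' = B \<and> EB' = EB" if h: "subgraph B' EB' V E" "B \<subseteq> B'" "EB \<subseteq> EB'" "connected_graph B' EB'"
        "no_cut_vertex B' EB'" for B' EB'
  proof -
    have "B' \<subseteq> V1 \<or> B' \<subseteq> V2" by (rule sep[OF h(1) h(4) h(5) VV int spl])
    moreover have "\<not> B' \<subseteq> V2"
    proof
      assume "B' \<subseteq> V2"
      obtain e where e: "e \<in> EB" using ne by auto
      have "e \<subseteq> B" "e \<in> E1" using e sb unfolding subgraph_def by auto
      hence "e \<subseteq> V1 \<inter> V2" "e \<in> E" using \<open>B' \<subseteq> V2\<close> h(2) E1def by auto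
      hence "e \<subseteq> {c}" using int by auto
      hence "card e \<le> 1" using card_mono[of "{c}" e] by auto
      thus False using Ec[OF \<open>e \<in> E\<close>] by auto
    qed
    ultimately have "B' \<subseteq> V1" by auto
    hence "subgraph B' EB' V1 E1" using h(1) E1def unfolding subgraph_def by blast
    thus ?thesis using mx h by blast
  qed
  thus ?thesis using sub cb nb unfolding is_block_def by blast
qed

lemma split_exists:
  assumes sg: "simple_graph V E" and ne: "V \<noteq> {}" and nb: "\<not> (connected_graph V E \<and> no_cut_vertex V E)"
  shows "\<exists>V1 V2 c. V = V1 \<union> V2 \<and> V1 \<noteq> V \<and> V2 \<noteq> V \<and> V1 \<inter> V2 \<subseteq> {c} \<and> (\<forall>e\<in>E. e \<subseteq> V1 \<or> e \<subseteq> V2)"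
proof -
  have Ec: "\<And>e. e \<in> E \<Longrightarrow> e \<subseteq> V \<and> card e = 2" using sg unfolding simple_graph_def by auto
  have two: "\<exists>a b. a \<noteq> b \<and> e = {a,b}" if "e \<in> E" for e
    using Ec[OF that] by (auto simp: card_2_iff)
  show ?thesis
  proof (cases "connected_graph V E")
    case False
    define R where "R = (\<lambda>a b. a \<in> V \<and> b \<in> V \<and> {a, b} \<in> E)"
    obtain x y where xy: "x \<in> V" "y \<in> V" "\<not> R\<^sup>*\<^sup>* x y"
      using False ne unfolding connected_graph_def R_def by blast
    define V1 where "V1 = {z\<in>V. R\<^sup>*\<^sup>* x z}"
    define V2 where "V2 = V - V1"
    have "\<forall>e\<in>E. e \<subseteq> V1 \<or> e \<subseteq> V2"
    proof
      fix e assume e: "e \<in> E"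
      then obtain a b where ab: "e = {a,b}" using two by blast
      have abV: "a \<in> V" "b \<in> V" using Ec[OF e] ab by auto
      have Rab: "R a b" "R b a" using abV e ab unfolding R_def by (auto simp: insert_commute)
      have "a \<in> V1 \<longleftrightarrow> b \<in> V1"
        using rtranclp.rtrancl_into_rtrancl[of R x a b] rtranclp.rtrancl_into_rtrancl[of R x b a] Rab abV
        unfolding V1_def by blast
      thus "e \<subseteq> V1 \<or> e \<subseteq> V2" using ab abV unfolding V2_def by auto
    qed
    moreover have "V1 \<noteq> V" using xy unfolding V1_def by auto
    moreover have "V2 \<noteq> V" using xy unfolding V2_def V1_def by auto
    moreover have "V = V1 \<union> V2" "V1 \<inter> V2 \<subseteq> {x}" unfolding V2_def V1_def by auto
    ultimately show ?thesis by blast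
  next
    case True
    hence "\<not> no_cut_vertex V E" using nb by simp
    then obtain c where c: "c \<in> V" "V - {c} \<noteq> {}" "\<not> connected_graph (V - {c}) {e\<in>E. c \<notin> e}"
      unfolding no_cut_vertex_def by blast
    define R where "R = (\<lambda>a b. a \<in> V - {c} \<and> b \<in> V - {c} \<and> {a, b} \<in> {e\<in>E. c \<notin> e})"
    obtain x y where xy: "x \<in> V - {c}" "y \<in> V - {c}" "\<not> R\<^sup>*\<^sup>* x y"
      using c unfolding connected_graph_def R_def by blast
    define C where "C = {z\<in>V - {c}. R\<^sup>*\<^sup>* x z}"
    define V1 where "V1 = C \<union> {c}"
    define V2 where "V2 = V - C"
    have "\<forall>e\<in>E. e \<subseteq> V1 \<or> e \<subseteq> V2"
    proof
      fix e assume e: "e \<in> E"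
      then obtain a b where ab: "e = {a,b}" "a \<noteq> b" using two by blast
      have abV: "a \<in> V" "b \<in> V" using Ec[OF e] ab by auto
      show "e \<subseteq> V1 \<or> e \<subseteq> V2"
      proof (cases "c \<in> e")
        case True
        have "c \<notin> C" unfolding C_def by auto
        thus ?thesis using True ab abV unfolding V1_def V2_def by auto
      next
        case False
        have Rab: "R a b" "R b a" using abV e ab False unfolding R_def by (auto simp: insert_commute)
        have "a \<in> C \<longleftrightarrow> b \<in> C"
          using rtranclp.rtrancl_into_rtrancl[of R x a b] rtranclp.rtrancl_into_rtrancl[of R x b a] Rab abV False ab
          unfolding C_def by blast
        thus ?thesis using ab abV unfolding V1_def V2_def by auto
      qed
    qed
    moreover have "V1 \<noteq> V" using xy unfolding V1_def C_def by auto
    moreover have "V2 \<noteq> V" using xy unfolding V2_def C_def by auto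
    moreover have "V = V1 \<union> V2" "V1 \<inter> V2 \<subseteq> {c}" using c(1) unfolding V2_def V1_def C_def by auto
    ultimately show ?thesis by blast
  qed
qed


lemma glue_side:
  assumes sg: "simple_graph V E" and md: "max_degree_le V E k"
    and VV: "V = V1 \<union> V2" and ne: "V1 \<noteq> V" and int: "V1 \<inter> V2 \<subseteq> {c0}"
    and spl: "\<forall>e\<in>E. e \<subseteq> V1 \<or> e \<subseteq> V2"
    and s1: "strongly_k_edge_orientable V1 {e\<in>E. e \<subseteq> V1} k"
    and s2: "strongly_k_edge_orientable V2 {e\<in>E. e \<subseteq> V2} k"
    and v: "v \<in> V1"
  shows "f_edge_orientable E (f_kv E k v)"
proof -
  obtain c where c: "c \<in> V2" "V1 \<inter> V2 \<subseteq> {c}"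
  proof (cases "V1 \<inter> V2 = {}")
    case True
    obtain z where "z \<in> V2" using ne VV by auto
    thus ?thesis using that True by auto
  next
    case False
    thus ?thesis using that int by auto
  qed
  show ?thesis
    by (rule glue[OF sg md VV c(2) c(1) v refl refl spl])
       (use s1 s2 v c(1) in \<open>auto simp: strongly_k_edge_orientable_def\<close>)
qed

lemma main_ind:
  "\<forall>V E. card V = n \<longrightarrow> simple_graph V E \<longrightarrow> max_degree_le V E k \<longrightarrow>
     (\<forall>B EB. is_block V E B EB \<longrightarrow> strongly_k_edge_orientable B EB k) \<longrightarrow>
     strongly_k_edge_orientable V E k"
proof (induction n rule: less_induct)
  case (less n)
  show ?case
  proof (intro allI impI)
    fix V :: "'a set" and E
    assume cn: "card V = n" and sg: "simple_graph V E" and md: "max_degree_le V E k"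
      and hb: "\<forall>B EB. is_block V E B EB \<longrightarrow> strongly_k_edge_orientable B EB k"
    have finV: "finite V" and Ec: "\<And>e. e \<in> E \<Longrightarrow> e \<subseteq> V \<and> card e = 2"
      using sg unfolding simple_graph_def by auto
    show "strongly_k_edge_orientable V E k"
    proof (cases "V = {}")
      case True thus ?thesis unfolding strongly_k_edge_orientable_def by simp
    next
      case ne: False
      show ?thesis
      proof (cases "connected_graph V E \<and> no_cut_vertex V E")
        case True
        have "is_block V E V E"
          using True Ec unfolding is_block_def subgraph_def by auto
        thus ?thesis using hb by blast
      next
        case False
        then obtain V1 V2 c0 where sp: "V = V1 \<union> V2" "V1 \<noteq> V" "V2 \<noteq> V" "V1 \<inter> V2 \<subseteq> {c0}"
          "\<forall>e\<in>E. e \<subseteq> V1 \<or> e \<subseteq> V2"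
          using split_exists[OF sg ne] by blast
        have sp': "V = V2 \<union> V1" "V2 \<inter> V1 \<subseteq> {c0}" "\<forall>e\<in>E. e \<subseteq> V2 \<or> e \<subseteq> V1"
          using sp by auto
        have side: "strongly_k_edge_orientable W {e\<in>E. e \<subseteq> W} k"
          if W: "V = W \<union> W'" "W \<noteq> V" "W \<inter> W' \<subseteq> {c0}" "\<forall>e\<in>E. e \<subseteq> W \<or> e \<subseteq> W'" for W W'
        proof -
          have "card W < n" using cn finV W by (metis psubsetI psubset_card_mono sup_ge1)
          moreover have "finite W" using finV W(1) by auto
          hence "simple_graph W {e\<in>E. e \<subseteq> W}" using Ec unfolding simple_graph_def by auto
          moreover have "max_degree_le W {e\<in>E. e \<subseteq> W} k"
            unfolding max_degree_le_def
          proof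
            fix x assume "x \<in> W"
            have fE: "finite E" by (rule finite_subset[of _ "Pow V"]) (use Ec finV in auto)
            have "degree {e\<in>E. e \<subseteq> W} x \<le> degree E x"
              unfolding degree_def by (rule card_mono) (use fE in auto)
            also have "\<dots> \<le> k" using md \<open>x \<in> W\<close> W(1) unfolding max_degree_le_def by auto
            finally show "degree {e\<in>E. e \<subseteq> W} x \<le> k" .
          qed
          moreover have "\<forall>B EB. is_block W {e\<in>E. e \<subseteq> W} B EB \<longrightarrow> strongly_k_edge_orientable B EB k"
          proof (intro allI impI)
            fix B EB assume b: "is_block W {e\<in>E. e \<subseteq> W} B EB"
            show "strongly_k_edge_orientable B EB k"
            proof (cases "EB = {}")
              case True thus ?thesis using strongly_empty by simp
            next
              case False
              have "is_block V E B EB" by (rule block_sub[OF sg W(1) W(3) W(4) refl b False])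
              thus ?thesis using hb by blast
            qed
          qed
          ultimately show ?thesis using less.IH by blast
        qed
        have s1: "strongly_k_edge_orientable V1 {e\<in>E. e \<subseteq> V1} k" by (rule side[OF sp(1,2,4,5)])
        have s2: "strongly_k_edge_orientable V2 {e\<in>E. e \<subseteq> V2} k" by (rule side[OF sp'(1) sp(3) sp'(2,3)])
        show ?thesis unfolding strongly_k_edge_orientable_def
        proof
          fix v assume "v \<in> V"
          hence "v \<in> V1 \<or> v \<in> V2" using sp by auto
          thus "f_edge_orientable E (f_kv E k v)"
          proof
            assume "v \<in> V1" thus ?thesis by (rule glue_side[OF sg md sp(1,2,4,5) s1 s2])
          next
            assume "v \<in> V2" thus ?thesis by (rule glue_side[OF sg md sp'(1) sp(3) sp'(2,3) s2 s1])
          qed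
        qed
      qed
    qed
  qed
qed

theorem mainTheorem12:
  fixes V :: "'a set" and E :: "'a set set" and k :: nat
  assumes "simple_graph V E"
    and "max_degree_le V E k"
    and "\<forall>B EB. is_block V E B EB \<longrightarrow> strongly_k_edge_orientable B EB k"
  shows "strongly_k_edge_orientable V E k"
  using main_ind assms by blast

end
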